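(* Let $A\in\mathbb{C}^{n\times n}$ be Hermitian and $\beta>0$, and consider $f(\mathbf{z})=\frac12\mathbf{z}^*A\mathbf{z}+\frac{\beta}{2}\sum_{k=1}^n|z_k|^4$ on $\mathbb{CS}^{n-1}=\{\mathbf{z}\in\mathbb{C}^n:\|\mathbf{z}\|_2=1\}$. Let $\mathbf{z}\in\mathbb{CS}^{n-1}$ be a stationary point of $\min_{\mathbf{z}\in\mathbb{CS}^{n-1}}f(\mathbf{z})$, i.e. $[A+2\beta\,\mathrm{diag}(|\mathbf{z}|^2)]\mathbf{z}=2\lambda\mathbf{z}$ with $\lambda=\frac12\mathbf{z}^*A\mathbf{z}+\beta\|\mathbf{z}\|_4^4$, and suppose that $H:=A+2\beta\,\mathrm{diag}(|\mathbf{z}|^2)-2\lambda I$ is positive semidefinite. Then $\mathbf{z}$ is a global minimizer of $f$ on $\mathbb{CS}^{n-1}$, and every global minimizer $\mathbf{y}$ of $f$ on $\mathbb{CS}^{n-1}$ belongs to $\llbracket\mathbf{z}\rrbracket=\{\mathbf{y}\in\mathbb{C}^n:|y_k|=|z_k|\ \forall k\in[n]\}$.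
   Context: $|\mathbf{z}|^2$ denotes the componentwise squared modulus vector $(|z_1|^2,\dots,|z_n|^2)$, $\mathrm{diag}(\mathbf{x})$ the diagonal matrix with diagonal $\mathbf{x}$, $[n]=\{1,\dots,n\}$, $\|\mathbf{z}\|_4^4=\sum_k|z_k|^4$. *)

theory Defs
  imports "HOL-Analysis.Analysis"
begin

definition hermitian :: "complex ^'n ^'n \<Rightarrow> bool" where
  "hermitian A \<longleftrightarrow> (\<forall>i j. A $ i $ j = cnj (A $ j $ i))"

definition qform :: "complex ^'n ^'n \<Rightarrow> complex ^'n \<Rightarrow> complex" where
  "qform A z = (\<Sum>i\<in>UNIV. \<Sum>j\<in>UNIV. cnj (z $ i) * A $ i $ j * z $ j)"

definition psd :: "complex ^'n ^'n \<Rightarrow> bool" where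
  "psd H \<longleftrightarrow> (\<forall>x. qform H x \<in> \<real> \<and> Re (qform H x) \<ge> 0)"

definition diagm :: "complex ^'n \<Rightarrow> complex ^'n ^'n" where
  "diagm d = (\<chi> i j. if i = j then d $ i else 0)"

definition sqmod :: "complex ^'n \<Rightarrow> complex ^'n" where
  "sqmod z = (\<chi> k. complex_of_real ((cmod (z $ k))^2))"

definition norm4_4 :: "complex ^'n \<Rightarrow> real" where
  "norm4_4 z = (\<Sum>k\<in>UNIV. (cmod (z $ k))^4)"

text \<open>f(z) = 1/2 z^* A z + beta/2 sum |z_k|^4 (real part taken; real when A Hermitian).\<close>
definition fobj :: "complex ^'n ^'n \<Rightarrow> real \<Rightarrow> complex ^'n \<Rightarrow> real" where
  "fobj A \<beta> z = Re (qform A z) / 2 + \<beta> / 2 * norm4_4 z"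

end

theory Submission
  imports Defs
begin

lemma qform_add: "qform (M + N) w = qform M w + qform N w"
  unfolding qform_def by (simp add: distrib_left distrib_right sum.distrib)

lemma qform_diff: "qform (M - N) w = qform M w - qform N w"
  unfolding qform_def by (simp add: right_diff_distrib left_diff_distrib sum_subtractf)

lemma qform_scaleR: "qform (c *\<^sub>R M) w = of_real c * qform M w"
  unfolding qform_def vector_scaleR_component by (simp add: sum_distrib_left scaleR_conv_of_real algebra_simps)

lemma cnj_mult_self: "cnj x * x = complex_of_real ((cmod x)^2)"
  using complex_norm_square by (simp add: mult.commute)

lemma qform_diag: "qform (diagm d) w = (\<Sum>i\<in>UNIV. d $ i * complex_of_real ((cmod (w $ i))^2))"
proof -
  have "qform (diagm d) w = (\<Sum>i\<in>UNIV. cnj (w $ i) * d $ i * w $ i)"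
    unfolding qform_def diagm_def
    by (simp add: if_distrib if_distribR sum.delta cong: if_cong)
  also have "\<dots> = (\<Sum>i\<in>UNIV. d $ i * complex_of_real ((cmod (w $ i))^2))"
  proof (rule sum.cong)
    fix i :: 'a
    show "cnj (w $ i) * d $ i * w $ i = d $ i * complex_of_real ((cmod (w $ i))^2)"
      using cnj_mult_self[of "w $ i"] by (metis mult.commute mult.left_commute)
  qed simp
  finally show ?thesis .
qed

lemma qform_mat: "qform (mat c) (w::complex^'n) = c * (\<Sum>i\<in>UNIV. complex_of_real ((cmod (w $ i))^2))"
proof -
  have "(mat c :: complex^'n^'n) = diagm (\<chi> i. c)"
    unfolding mat_def diagm_def by (simp add: vec_eq_iff)
  then have "qform (mat c) w = qform (diagm (\<chi> i. c)) w" by (simp only:)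
  also have "\<dots> = (\<Sum>i\<in>UNIV. c * complex_of_real ((cmod (w $ i))^2))"
    by (subst qform_diag) simp
  finally show ?thesis by (simp add: sum_distrib_left)
qed

lemma norm_sq_sum: "(norm (w::complex^'n))^2 = (\<Sum>i\<in>UNIV. (cmod (w $ i))^2)"
  unfolding norm_vec_def L2_set_def by (simp add: sum_nonneg)

lemma key:
  fixes A :: "complex ^'n ^'n" and \<beta> :: real and z w :: "complex ^'n" and lam :: complex
  assumes unit: "norm z = 1" and unitw: "norm w = 1"
    and lam: "lam = qform A z / 2 + complex_of_real (\<beta> * norm4_4 z)"
    and psd: "psd (A + (2 * \<beta>) *\<^sub>R diagm (sqmod z) - mat (2 * lam))"
  shows "fobj A \<beta> w \<ge> fobj A \<beta> z + \<beta> / 2 * (\<Sum>k\<in>UNIV. ((cmod (z $ k))^2 - (cmod (w $ k))^2)^2)"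
proof -
  define a where "a k = (cmod (z $ k))^2" for k
  define b where "b k = (cmod (w $ k))^2" for k
  have sb: "(\<Sum>k\<in>UNIV. b k) = 1" using norm_sq_sum[of w] unitw by (simp add: b_def)
  have q: "Re (qform (A + (2 * \<beta>) *\<^sub>R diagm (sqmod z) - mat (2 * lam)) w) \<ge> 0"
    using psd unfolding psd_def by blast
  have "Re (qform (A + (2 * \<beta>) *\<^sub>R diagm (sqmod z) - mat (2 * lam)) w)
     = Re (qform A w) + 2 * \<beta> * (\<Sum>k\<in>UNIV. a k * b k) - 2 * Re lam * (\<Sum>k\<in>UNIV. b k)"
    by (simp add: qform_add qform_diff qform_scaleR qform_diag qform_mat sqmod_def a_def b_def
        Re_sum)
  with q sb have h1: "Re (qform A w) + 2 * \<beta> * (\<Sum>k\<in>UNIV. a k * b k) - 2 * Re lam \<ge> 0" by simp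
  have rl: "Re lam = Re (qform A z) / 2 + \<beta> * (\<Sum>k\<in>UNIV. (a k)^2)"
    using lam by (simp add: norm4_4_def a_def power2_eq_square[symmetric] power_mult[symmetric])
  have fw: "fobj A \<beta> w = Re (qform A w) / 2 + \<beta> / 2 * (\<Sum>k\<in>UNIV. (b k)^2)"
    by (simp add: fobj_def norm4_4_def b_def power_mult[symmetric])
  have fz: "fobj A \<beta> z = Re (qform A z) / 2 + \<beta> / 2 * (\<Sum>k\<in>UNIV. (a k)^2)"
    by (simp add: fobj_def norm4_4_def a_def power_mult[symmetric])
  have sq: "(\<Sum>k\<in>UNIV. (a k - b k)^2) = (\<Sum>k\<in>UNIV. (a k)^2) - 2 * (\<Sum>k\<in>UNIV. a k * b k) + (\<Sum>k\<in>UNIV. (b k)^2)"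
    by (simp add: power2_diff sum.distrib sum_subtractf sum_distrib_left algebra_simps)
  show ?thesis
    unfolding fw fz a_def[symmetric] b_def[symmetric] sq using h1 rl
    by (simp add: algebra_simps)
qed

theorem theorem1:
  fixes A :: "complex ^'n ^'n" and \<beta> :: real and z :: "complex ^'n" and lam :: complex
  assumes herm: "hermitian A"
    and beta: "\<beta> > 0"
    and unit: "norm z = 1"
    and lam: "lam = qform A z / 2 + complex_of_real (\<beta> * norm4_4 z)"
    and stat: "(A + (2 * \<beta>) *\<^sub>R diagm (sqmod z)) *v z = (2 * lam) *s z"
    and psd: "psd (A + (2 * \<beta>) *\<^sub>R diagm (sqmod z) - mat (2 * lam))"
  shows "(\<forall>w. norm w = 1 \<longrightarrow> fobj A \<beta> z \<le> fobj A \<beta> w)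
       \<and> (\<forall>y. norm y = 1 \<and> (\<forall>w. norm w = 1 \<longrightarrow> fobj A \<beta> y \<le> fobj A \<beta> w)
              \<longrightarrow> (\<forall>k. cmod (y $ k) = cmod (z $ k)))"
proof (intro conjI allI impI)
  fix w :: "complex ^'n" assume w: "norm w = 1"
  have "0 \<le> \<beta> / 2 * (\<Sum>k\<in>UNIV. ((cmod (z $ k))^2 - (cmod (w $ k))^2)^2)"
    using beta by (simp add: sum_nonneg)
  then show "fobj A \<beta> z \<le> fobj A \<beta> w" using key[OF unit w lam psd] by linarith
next
  fix y :: "complex ^'n" and k
  assume y: "norm y = 1 \<and> (\<forall>w. norm w = 1 \<longrightarrow> fobj A \<beta> y \<le> fobj A \<beta> w)"
  have "fobj A \<beta> y \<le> fobj A \<beta> z" using y unit by blast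
  with key[OF unit _ lam psd, of y] y have
    "\<beta> / 2 * (\<Sum>k\<in>UNIV. ((cmod (z $ k))^2 - (cmod (y $ k))^2)^2) \<le> 0" by linarith
  with beta have s0: "(\<Sum>k\<in>UNIV. ((cmod (z $ k))^2 - (cmod (y $ k))^2)^2) \<le> 0"
    by (simp add: mult_le_0_iff)
  have "(\<Sum>k\<in>UNIV. ((cmod (z $ k))^2 - (cmod (y $ k))^2)^2) = 0"
    using s0 by (meson antisym sum_nonneg zero_le_power2)
  then have "((cmod (z $ k))^2 - (cmod (y $ k))^2)^2 = 0"
    by (subst (asm) sum_nonneg_eq_0_iff) auto
  then have "(cmod (z $ k))^2 = (cmod (y $ k))^2" by simp
  then show "cmod (y $ k) = cmod (z $ k)"
    by (metis norm_ge_zero power2_eq_iff_nonneg)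
qed

end
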